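(* Let $k$ be a field, $V$ a $k$-vector space and $\varphi,\psi\in\mathrm{End}_k(V)$ finite potent endomorphisms such that $\varphi\psi-\psi\varphi$ has finite rank. Then $\langle\varphi,\psi\rangle:=\varphi\,k[\varphi,\psi]+\psi\,k[\varphi,\psi]$ is a finite potent subspace of $\mathrm{End}_k(V)$.
   Context: An endomorphism $\varphi$ of $V$ is finite potent if $\varphi^nV$ is finite dimensional for some $n$. $k[\varphi,\psi]$ denotes the $k$-subalgebra of $\mathrm{End}_k(V)$ generated by $\varphi$ and $\psi$. A subspace $F\subseteq\mathrm{End}_k(V)$ is finite potent if there is $n$ such that for any $\varphi_1,\dots,\varphi_n\in F$ the space $\varphi_1\cdots\varphi_nV$ is finite dimensional. *)

theory Defs
  imports Complex_Main
begin

definition fin_dim :: "('k::field \<Rightarrow> 'v::ab_group_add \<Rightarrow> 'v) \<Rightarrow> 'v set \<Rightarrow> bool" where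
  "fin_dim s S \<longleftrightarrow> (\<exists>B. finite B \<and> S \<subseteq> module.span s B)"

definition finite_rank :: "('k::field \<Rightarrow> 'v::ab_group_add \<Rightarrow> 'v) \<Rightarrow> ('v \<Rightarrow> 'v) \<Rightarrow> bool" where
  "finite_rank s f \<longleftrightarrow> fin_dim s (range f)"

definition finite_potent :: "('k::field \<Rightarrow> 'v::ab_group_add \<Rightarrow> 'v) \<Rightarrow> ('v \<Rightarrow> 'v) \<Rightarrow> bool" where
  "finite_potent s f \<longleftrightarrow> (\<exists>n. fin_dim s (range (f ^^ n)))"

inductive_set kalg :: "('k::field \<Rightarrow> 'v::ab_group_add \<Rightarrow> 'v) \<Rightarrow> ('v \<Rightarrow> 'v) \<Rightarrow> ('v \<Rightarrow> 'v) \<Rightarrow> ('v \<Rightarrow> 'v) set"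
  for s :: "'k::field \<Rightarrow> 'v::ab_group_add \<Rightarrow> 'v" and \<phi> \<psi> :: "'v \<Rightarrow> 'v" where
  kalg_id: "id \<in> kalg s \<phi> \<psi>"
| kalg_phi: "\<phi> \<in> kalg s \<phi> \<psi>"
| kalg_psi: "\<psi> \<in> kalg s \<phi> \<psi>"
| kalg_add: "f \<in> kalg s \<phi> \<psi> \<Longrightarrow> g \<in> kalg s \<phi> \<psi> \<Longrightarrow> (\<lambda>x. f x + g x) \<in> kalg s \<phi> \<psi>"
| kalg_scale: "f \<in> kalg s \<phi> \<psi> \<Longrightarrow> (\<lambda>x. s c (f x)) \<in> kalg s \<phi> \<psi>"
| kalg_comp: "f \<in> kalg s \<phi> \<psi> \<Longrightarrow> g \<in> kalg s \<phi> \<psi> \<Longrightarrow> f \<circ> g \<in> kalg s \<phi> \<psi>"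

definition gen_space :: "('k::field \<Rightarrow> 'v::ab_group_add \<Rightarrow> 'v) \<Rightarrow> ('v \<Rightarrow> 'v) \<Rightarrow> ('v \<Rightarrow> 'v) \<Rightarrow> ('v \<Rightarrow> 'v) set" where
  "gen_space s \<phi> \<psi> = {(\<lambda>x. \<phi> (a x) + \<psi> (b x)) | a b. a \<in> kalg s \<phi> \<psi> \<and> b \<in> kalg s \<phi> \<psi>}"

definition finite_potent_subspace :: "('k::field \<Rightarrow> 'v::ab_group_add \<Rightarrow> 'v) \<Rightarrow> ('v \<Rightarrow> 'v) set \<Rightarrow> bool" where
  "finite_potent_subspace s F \<longleftrightarrow>
     (\<forall>f\<in>F. Vector_Spaces.linear s s f) \<and> (\<lambda>x. 0) \<in> F \<and>
     (\<forall>f\<in>F. \<forall>g\<in>F. (\<lambda>x. f x + g x) \<in> F) \<and> (\<forall>c. \<forall>f\<in>F. (\<lambda>x. s c (f x)) \<in> F) \<and>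
     (\<exists>n. \<forall>fs. length fs = n \<and> set fs \<subseteq> F \<longrightarrow> fin_dim s (range (foldr (\<circ>) fs id)))"

end

theory Submission
  imports Defs
begin

locale fpl = vector_space s for s :: "'k::field \<Rightarrow> 'v::ab_group_add \<Rightarrow> 'v" +
  fixes \<phi> \<psi> :: "'v \<Rightarrow> 'v"
  assumes lphi: "Vector_Spaces.linear s s \<phi>" and lpsi: "Vector_Spaces.linear s s \<psi>"
    and fphi: "finite_potent s \<phi>" and fpsi: "finite_potent s \<psi>"
    and cfr: "finite_rank s (\<lambda>x. \<phi> (\<psi> x) - \<psi> (\<phi> x))"
begin

lemma lin_iff: "Vector_Spaces.linear s s f \<longleftrightarrow> (\<forall>x y. f (x + y) = f x + f y) \<and> (\<forall>c x. f (s c x) = s c (f x))"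
  unfolding linear_iff_module_hom module_hom_iff using module_axioms by auto

lemma linD: assumes "Vector_Spaces.linear s s f"
  shows "f (x + y) = f x + f y" "f (s c x) = s c (f x)" "f (x - y) = f x - f y" "f 0 = 0" "f (- x) = - f x"
proof -
  interpret Vector_Spaces.linear s s f using assms .
  show "f (x + y) = f x + f y" "f (s c x) = s c (f x)" "f (x - y) = f x - f y" "f 0 = 0" "f (- x) = - f x"
    by (auto simp: add scale diff neg)
qed

lemma fin_dim_mono: "S \<subseteq> T \<Longrightarrow> fin_dim s T \<Longrightarrow> fin_dim s S"
  unfolding fin_dim_def by blast

abbreviation FR where "FR f \<equiv> finite_rank s f"

lemma FR_add: "FR f \<Longrightarrow> FR g \<Longrightarrow> FR (\<lambda>x. f x + g x)"
  unfolding finite_rank_def fin_dim_def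
proof (elim exE conjE)
  fix A B assume "finite A" "range f \<subseteq> span A" "finite B" "range g \<subseteq> span B"
  then show "\<exists>C. finite C \<and> range (\<lambda>x. f x + g x) \<subseteq> span C"
  proof (intro exI[of _ "A \<union> B"] conjI)
    have "range f \<subseteq> span (A \<union> B)" "range g \<subseteq> span (A \<union> B)"
      using \<open>range f \<subseteq> span A\<close> \<open>range g \<subseteq> span B\<close> span_mono[of A "A \<union> B"] span_mono[of B "A \<union> B"] by auto
    then show "range (\<lambda>x. f x + g x) \<subseteq> span (A \<union> B)" by (auto intro!: span_add)
  qed (use \<open>finite A\<close> \<open>finite B\<close> in auto)
qed

lemma FR_neg: "FR f \<Longrightarrow> FR (\<lambda>x. - f x)"
  unfolding finite_rank_def fin_dim_def by (auto intro!: span_neg)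

lemma FR_scale: "FR f \<Longrightarrow> FR (\<lambda>x. s c (f x))"
  unfolding finite_rank_def fin_dim_def by (auto intro!: span_scale)

lemma FR_zero: "FR (\<lambda>x. 0)"
  unfolding finite_rank_def fin_dim_def by (auto intro!: exI[of _ "{}"] span_zero)

lemma FR_diff: "FR f \<Longrightarrow> FR g \<Longrightarrow> FR (\<lambda>x. f x - g x)"
  using FR_add[OF _ FR_neg[of g], of f] by simp

lemma FR_right: "FR f \<Longrightarrow> FR (\<lambda>x. f (h x))"
  unfolding finite_rank_def fin_dim_def by blast

lemma FR_left: assumes "Vector_Spaces.linear s s g" "FR f" shows "FR (\<lambda>x. g (f x))"
proof -
  interpret Vector_Spaces.linear s s g using assms(1) .
  from assms(2) obtain B where "finite B" "range f \<subseteq> span B" unfolding finite_rank_def fin_dim_def by blast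
  then have "range (\<lambda>x. g (f x)) \<subseteq> span (g ` B)" using span_image by auto
  then show ?thesis using \<open>finite B\<close> unfolding finite_rank_def fin_dim_def by blast
qed

lemma FR_cong: "FR f \<Longrightarrow> (\<And>x. f x = g x) \<Longrightarrow> FR g"
  by (metis ext)

definition cm where "cm a b \<longleftrightarrow> FR (\<lambda>x. a (b x) - b (a x))"

lemma cm_sym: "cm a b \<Longrightarrow> cm b a"
  unfolding cm_def by (drule FR_neg) simp

lemma cm_refl: "cm a a"
  unfolding cm_def using FR_zero by simp

lemma cm_id: "cm a id"
  unfolding cm_def using FR_zero by simp

lemma cm_add: assumes "Vector_Spaces.linear s s a" "cm a f" "cm a g" shows "cm a (\<lambda>x. f x + g x)"
  using FR_add[OF assms(2,3)[unfolded cm_def]] unfolding cm_def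
  by (simp add: linD[OF assms(1)] algebra_simps)

lemma cm_scale: assumes "Vector_Spaces.linear s s a" "cm a f" shows "cm a (\<lambda>x. s c (f x))"
  using FR_scale[OF assms(2)[unfolded cm_def], of c] unfolding cm_def
  by (simp add: linD[OF assms(1)] scale_right_diff_distrib)

lemma cm_comp: assumes "Vector_Spaces.linear s s f" "cm a f" "cm a g" shows "cm a (f \<circ> g)"
proof -
  have "FR (\<lambda>x. (a (f (g x)) - f (a (g x))) + f (a (g x) - g (a x)))"
    using FR_add[OF FR_right[OF assms(2)[unfolded cm_def]] FR_left[OF assms(1) assms(3)[unfolded cm_def]]] .
  then show ?thesis unfolding cm_def by (simp add: linD[OF assms(1)])
qed

lemma kalg_lin: "f \<in> kalg s \<phi> \<psi> \<Longrightarrow> Vector_Spaces.linear s s f"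
proof (induction rule: kalg.induct)
  case kalg_id then show ?case by (simp add: lin_iff)
next
  case kalg_phi then show ?case by (rule lphi)
next
  case kalg_psi then show ?case by (rule lpsi)
next
  case (kalg_add f g) then show ?case by (simp add: lin_iff scale_right_distrib)
next
  case (kalg_scale f c) then show ?case by (simp add: lin_iff scale_right_distrib)
next
  case (kalg_comp f g) then show ?case by (simp add: lin_iff)
qed

lemma cm_kalg: assumes "Vector_Spaces.linear s s a" "cm a \<phi>" "cm a \<psi>" "b \<in> kalg s \<phi> \<psi>" shows "cm a b"
  using assms(4)
proof (induction rule: kalg.induct)
  case kalg_id then show ?case by (rule cm_id)
next
  case kalg_phi then show ?case by (rule assms(2))
next
  case kalg_psi then show ?case by (rule assms(3))
next
  case (kalg_add f g) then show ?case using cm_add[OF assms(1)] by blast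
next
  case (kalg_scale f c) then show ?case using cm_scale[OF assms(1)] by blast
next
  case (kalg_comp f g) then show ?case by (intro cm_comp kalg_lin)
qed

lemma cm_phi_psi: "cm \<phi> \<psi>" using cfr unfolding cm_def .

lemma cm_all: assumes "a \<in> kalg s \<phi> \<psi>" "b \<in> kalg s \<phi> \<psi>" shows "cm a b"
proof -
  have "cm \<phi> c" if "c \<in> kalg s \<phi> \<psi>" for c using cm_kalg[OF lphi cm_refl cm_phi_psi that] .
  moreover have "cm \<psi> c" if "c \<in> kalg s \<phi> \<psi>" for c using cm_kalg[OF lpsi cm_sym[OF cm_phi_psi] cm_refl that] .
  ultimately show ?thesis using cm_kalg[OF kalg_lin[OF assms(1)] cm_sym cm_sym assms(2)] kalg_phi kalg_psi assms(1) by blast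
qed

lemma pow_kalg: "\<phi> ^^ i \<in> kalg s \<phi> \<psi>" "\<psi> ^^ i \<in> kalg s \<phi> \<psi>"
  by (induction i) (auto intro: kalg.intros)


inductive_set T :: "nat \<Rightarrow> ('v \<Rightarrow> 'v) set" for N where
  Tb: "i + j \<ge> N \<Longrightarrow> h \<in> kalg s \<phi> \<psi> \<Longrightarrow> (\<lambda>x. (\<phi>^^i) ((\<psi>^^j) (h x))) \<in> T N"
| Ta: "f \<in> T N \<Longrightarrow> g \<in> T N \<Longrightarrow> (\<lambda>x. f x + g x) \<in> T N"
| Te: "g \<in> T N \<Longrightarrow> FR (\<lambda>x. f x - g x) \<Longrightarrow> f \<in> T N"

lemma gen_lin: "g \<in> gen_space s \<phi> \<psi> \<Longrightarrow> Vector_Spaces.linear s s g"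
  unfolding gen_space_def
  by (auto simp: lin_iff linD[OF lphi] linD[OF lpsi] linD[OF kalg_lin] scale_right_distrib)

lemma T_step: assumes g: "g \<in> gen_space s \<phi> \<psi>" and f: "f \<in> T N" shows "g \<circ> f \<in> T (Suc N)"
proof -
  have lg: "Vector_Spaces.linear s s g" by (rule gen_lin[OF g])
  from g obtain a b where gab: "g = (\<lambda>x. \<phi> (a x) + \<psi> (b x))" and a: "a \<in> kalg s \<phi> \<psi>" and b: "b \<in> kalg s \<phi> \<psi>"
    unfolding gen_space_def by blast
  from f show ?thesis
  proof (induction rule: T.induct)
    case (Tb i j h)
    define P where "P = (\<lambda>x. (\<phi>^^i) ((\<psi>^^j) x))"
    have Pk: "P \<in> kalg s \<phi> \<psi>"
      using kalg_comp[OF pow_kalg(1)[of i] pow_kalg(2)[of j]] unfolding P_def o_def .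
    have E: "(\<lambda>x. (\<phi>^^Suc i) ((\<psi>^^j) ((a \<circ> h) x)) + (\<phi>^^i) ((\<psi>^^Suc j) ((b \<circ> h) x))) \<in> T (Suc N)"
      using Tb by (intro T.Ta T.Tb kalg_comp a b) auto
    have c1: "FR (\<lambda>x. \<phi> (a (P (h x)) - P (a (h x))))"
      using FR_left[OF lphi FR_right[OF cm_all[OF a Pk, unfolded cm_def]]] .
    have c2: "FR (\<lambda>x. \<psi> (b (P (h x)) - P (b (h x))))"
      using FR_left[OF lpsi FR_right[OF cm_all[OF b Pk, unfolded cm_def]]] .
    have c3: "FR (\<lambda>x. \<psi> ((\<phi>^^i) ((\<psi>^^j) (b (h x)))) - (\<phi>^^i) (\<psi> ((\<psi>^^j) (b (h x)))))"
      using FR_right[OF cm_all[OF kalg_psi pow_kalg(1)[of i], unfolded cm_def]] .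
    have "FR (\<lambda>x. g (P (h x)) - ((\<phi>^^Suc i) ((\<psi>^^j) ((a \<circ> h) x)) + (\<phi>^^i) ((\<psi>^^Suc j) ((b \<circ> h) x))))"
      using FR_add[OF FR_add[OF c1 c2] c3] unfolding gab P_def
      by (simp add: linD[OF lphi] linD[OF lpsi] algebra_simps)
    from T.Te[OF E this] show ?case unfolding P_def o_def .
  next
    case (Ta f1 f2)
    have "g \<circ> (\<lambda>x. f1 x + f2 x) = (\<lambda>x. (g \<circ> f1) x + (g \<circ> f2) x)"
      by (auto simp: linD[OF lg])
    then show ?case using T.Ta[OF Ta.IH] by simp
  next
    case (Te g' f)
    have "FR (\<lambda>x. (g \<circ> f) x - (g \<circ> g') x)"
      using FR_left[OF lg Te.hyps(2)] by (simp add: linD[OF lg])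
    then show ?case using T.Te[OF Te.IH] by blast
  qed
qed

lemma pow_lin: "Vector_Spaces.linear s s (\<phi>^^i)" "Vector_Spaces.linear s s (\<psi>^^i)"
  using kalg_lin[OF pow_kalg(1)] kalg_lin[OF pow_kalg(2)] by auto

lemma T_FR: assumes n1: "fin_dim s (range (\<phi>^^n1))" and n2: "fin_dim s (range (\<psi>^^n2))"
  and f: "f \<in> T (n1 + n2)" shows "FR f"
  using f
proof (induction rule: T.induct)
  case (Tb i j h)
  show ?case
  proof (cases "n1 \<le> i")
    case True
    have "\<phi>^^i = (\<phi>^^n1) \<circ> (\<phi>^^(i - n1))" using True
      by (metis funpow_add le_add_diff_inverse)
    then have "range (\<lambda>x. (\<phi>^^i) ((\<psi>^^j) (h x))) \<subseteq> range (\<phi>^^n1)" by auto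
    then show ?thesis using n1 fin_dim_mono unfolding finite_rank_def by blast
  next
    case False
    then have "n2 \<le> j" using Tb by auto
    then have "\<psi>^^j = (\<psi>^^n2) \<circ> (\<psi>^^(j - n2))"
      by (metis funpow_add le_add_diff_inverse)
    then have "range (\<lambda>x. (\<psi>^^j) (h x)) \<subseteq> range (\<psi>^^n2)" by auto
    then have "FR (\<lambda>x. (\<psi>^^j) (h x))" using n2 fin_dim_mono unfolding finite_rank_def by blast
    then show ?thesis by (rule FR_left[OF pow_lin(1)])
  qed
next
  case (Ta f g) then show ?case using FR_add by blast
next
  case (Te g f)
  show ?case using FR_add[OF Te.IH Te.hyps(2)] by simp
qed

lemma foldr_T: "set fs \<subseteq> gen_space s \<phi> \<psi> \<Longrightarrow> foldr (\<circ>) fs id \<in> T (length fs)"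
proof (induction fs)
  case Nil
  have "(\<lambda>x. (\<phi>^^0) ((\<psi>^^0) (id x))) \<in> T 0" by (intro T.Tb kalg_id) auto
  then show ?case by (simp add: id_def)
next
  case (Cons g fs)
  have g: "g \<in> gen_space s \<phi> \<psi>" and fs: "set fs \<subseteq> gen_space s \<phi> \<psi>" using Cons.prems by auto
  have "g \<circ> foldr (\<circ>) fs id \<in> T (Suc (length fs))" using T_step[OF g Cons.IH[OF fs]] .
  moreover have "foldr (\<circ>) (g # fs) id = g \<circ> foldr (\<circ>) fs id" by simp
  ultimately show ?case by (simp only: length_Cons)
qed

lemma gen_spaceI: "a \<in> kalg s \<phi> \<psi> \<Longrightarrow> b \<in> kalg s \<phi> \<psi> \<Longrightarrow> (\<lambda>x. \<phi> (a x) + \<psi> (b x)) \<in> gen_space s \<phi> \<psi>"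
  unfolding gen_space_def by blast

lemma gen_spaceE: assumes "f \<in> gen_space s \<phi> \<psi>"
  obtains a b where "f = (\<lambda>x. \<phi> (a x) + \<psi> (b x))" "a \<in> kalg s \<phi> \<psi>" "b \<in> kalg s \<phi> \<psi>"
  using assms unfolding gen_space_def by blast

lemma gen_zero: "(\<lambda>x. 0) \<in> gen_space s \<phi> \<psi>"
proof -
  have zk: "(\<lambda>x. s 0 (id x)) \<in> kalg s \<phi> \<psi>" by (intro kalg_scale kalg_id)
  have e: "(\<lambda>x. 0) = (\<lambda>x. \<phi> (s 0 (id x)) + \<psi> (s 0 (id x)))"
    by (simp add: linD[OF lphi] linD[OF lpsi])
  show ?thesis unfolding e by (rule gen_spaceI[OF zk zk])
qed

lemma gen_add: assumes "f \<in> gen_space s \<phi> \<psi>" "g \<in> gen_space s \<phi> \<psi>"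
  shows "(\<lambda>x. f x + g x) \<in> gen_space s \<phi> \<psi>"
proof -
  obtain a b where f: "f = (\<lambda>x. \<phi> (a x) + \<psi> (b x))" and a: "a \<in> kalg s \<phi> \<psi>" and b: "b \<in> kalg s \<phi> \<psi>"
    using assms(1) by (rule gen_spaceE)
  obtain a' b' where g: "g = (\<lambda>x. \<phi> (a' x) + \<psi> (b' x))" and a': "a' \<in> kalg s \<phi> \<psi>" and b': "b' \<in> kalg s \<phi> \<psi>"
    using assms(2) by (rule gen_spaceE)
  have e: "(\<lambda>x. f x + g x) = (\<lambda>x. \<phi> (a x + a' x) + \<psi> (b x + b' x))"
    unfolding f g by (simp add: linD[OF lphi] linD[OF lpsi] add_ac)
  show ?thesis unfolding e by (intro gen_spaceI kalg_add a b a' b')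
qed

lemma gen_scale: assumes "f \<in> gen_space s \<phi> \<psi>"
  shows "(\<lambda>x. s c (f x)) \<in> gen_space s \<phi> \<psi>"
proof -
  obtain a b where f: "f = (\<lambda>x. \<phi> (a x) + \<psi> (b x))" and a: "a \<in> kalg s \<phi> \<psi>" and b: "b \<in> kalg s \<phi> \<psi>"
    using assms(1) by (rule gen_spaceE)
  have e: "(\<lambda>x. s c (f x)) = (\<lambda>x. \<phi> (s c (a x)) + \<psi> (s c (b x)))"
    unfolding f by (simp add: linD[OF lphi] linD[OF lpsi] scale_right_distrib)
  show ?thesis unfolding e by (intro gen_spaceI kalg_scale a b)
qed

lemma main: "finite_potent_subspace s (gen_space s \<phi> \<psi>)"
proof -
  obtain n1 n2 where n1: "fin_dim s (range (\<phi>^^n1))" and n2: "fin_dim s (range (\<psi>^^n2))"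
    using fphi fpsi unfolding finite_potent_def by blast
  have fp: "fin_dim s (range (foldr (\<circ>) fs id))"
    if "length fs = n1 + n2 \<and> set fs \<subseteq> gen_space s \<phi> \<psi>" for fs
  proof -
    have "foldr (\<circ>) fs id \<in> T (n1 + n2)" using foldr_T[of fs] that by simp
    then show ?thesis using T_FR[OF n1 n2] unfolding finite_rank_def by blast
  qed
  show ?thesis unfolding finite_potent_subspace_def
  proof (intro conjI ballI allI exI[of _ "n1 + n2"] impI)
    show "\<And>f. f \<in> gen_space s \<phi> \<psi> \<Longrightarrow> Vector_Spaces.linear s s f" by (rule gen_lin)
    show "(\<lambda>x. 0) \<in> gen_space s \<phi> \<psi>" by (rule gen_zero)
    show "\<And>f g. f \<in> gen_space s \<phi> \<psi> \<Longrightarrow> g \<in> gen_space s \<phi> \<psi> \<Longrightarrow> (\<lambda>x. f x + g x) \<in> gen_space s \<phi> \<psi>"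
      by (rule gen_add)
    show "\<And>c f. f \<in> gen_space s \<phi> \<psi> \<Longrightarrow> (\<lambda>x. s c (f x)) \<in> gen_space s \<phi> \<psi>"
      by (rule gen_scale)
  qed (rule fp)
qed

end

theorem lemma3p4:
  fixes s :: "'k::field \<Rightarrow> 'v::ab_group_add \<Rightarrow> 'v" and \<phi> \<psi> :: "'v \<Rightarrow> 'v"
  assumes "vector_space s"
    and "Vector_Spaces.linear s s \<phi>" and "Vector_Spaces.linear s s \<psi>"
    and "finite_potent s \<phi>" and "finite_potent s \<psi>"
    and "finite_rank s (\<lambda>x. \<phi> (\<psi> x) - \<psi> (\<phi> x))"
  shows "finite_potent_subspace s (gen_space s \<phi> \<psi>)"
proof -
  interpret fpl s \<phi> \<psi> using assms by (simp add: fpl_def fpl_axioms_def)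
  show ?thesis by (rule main)
qed

end
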